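(* For each integer $L\ge 2$ there is an irrational number $x=[a_0,a_1,a_2,\ldots]$ with all $a_i\in\{1,2,3,4\}$ and periodic sequence of partial quotients, such that its Jacobi sequence is periodic with repeating block $1,1,\ldots,1,*$ of length $L$ (the value $1$ repeated $L-1$ times followed by $*$).
   Context: For $x\in\mathbb{R}\setminus\mathbb{Q}$ with regular continued fraction expansion $x=[a_0,a_1,a_2,\ldots]$, the convergents $s_k/t_k$ are defined by $s_{-1}=1$, $s_0=a_0$, $s_k=a_ks_{k-1}+s_{k-2}$ and $t_{-1}=0$, $t_0=1$, $t_k=a_kt_{k-1}+t_{k-2}$ for $k\ge1$. For an odd natural number $n$ and an integer $m$ coprime to $n$, $\left(\frac{m}{n}\right)$ is the usual Jacobi symbol (equal to $1$ if $n=1$); if $n$ is even and $\gcd(m,n)=1$, one sets $\left(\frac{m}{n}\right)=*$, a fixed symbol different from $\pm1$. The Jacobi sequence of $x$ is $\left(\frac{s_k}{t_k}\right)$, $k\ge 0$. *)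

theory Defs
  imports Complex_Main "HOL-Number_Theory.Number_Theory"
begin

(* Convergent numerators/denominators: cf_st a k = (s_k, t_k), k >= 0,
   with s_{-1}=1, t_{-1}=0, s_0=a_0, t_0=1, s_k = a_k s_{k-1} + s_{k-2}. *)
fun cf_st :: "(nat \<Rightarrow> int) \<Rightarrow> nat \<Rightarrow> int \<times> int" where
  "cf_st a 0 = (a 0, 1)"
| "cf_st a (Suc 0) = (a 1 * a 0 + 1, a 1)"
| "cf_st a (Suc (Suc k)) =
     (a (Suc (Suc k)) * fst (cf_st a (Suc k)) + fst (cf_st a k),
      a (Suc (Suc k)) * snd (cf_st a (Suc k)) + snd (cf_st a k))"

definition cf_s :: "(nat \<Rightarrow> int) \<Rightarrow> nat \<Rightarrow> int" where
  "cf_s a k = fst (cf_st a k)"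

definition cf_t :: "(nat \<Rightarrow> int) \<Rightarrow> nat \<Rightarrow> int" where
  "cf_t a k = snd (cf_st a k)"

definition is_cf_expansion :: "real \<Rightarrow> (nat \<Rightarrow> int) \<Rightarrow> bool" where
  "is_cf_expansion x a \<longleftrightarrow> (\<forall>i\<ge>1. a i \<ge> 1) \<and>
     (\<lambda>k. real_of_int (cf_s a k) / real_of_int (cf_t a k)) \<longlonglongrightarrow> x"

definition Jacobi :: "int \<Rightarrow> int \<Rightarrow> int" where
  "Jacobi m n = (\<Prod>p\<in>prime_factors n. Legendre m p ^ multiplicity p n)"

datatype jac_val = JVal int | JStar

definition jacobi_symb :: "int \<Rightarrow> int \<Rightarrow> jac_val" where
  "jacobi_symb m n = (if even n then JStar else JVal (Jacobi m n))"

definition jacobi_seq :: "(nat \<Rightarrow> int) \<Rightarrow> nat \<Rightarrow> jac_val" where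
  "jacobi_seq a k = jacobi_symb (cf_s a k) (cf_t a k)"

end

theory Submission
  imports Defs
begin

lemma Legendre_cong:
  assumes "[a = b] (mod p)"
  shows "Legendre a p = Legendre b p"
proof -
  have "[a = 0] (mod p) \<longleftrightarrow> [b = 0] (mod p)"
    using assms by (meson cong_sym cong_trans)
  moreover have "QuadRes p a \<longleftrightarrow> QuadRes p b"
    unfolding QuadRes_def using assms by (meson cong_sym cong_trans)
  ultimately show ?thesis unfolding Legendre_def by simp
qed

lemma Legendre_cases: "Legendre a p \<in> {-1,0,1}"
  unfolding Legendre_def by auto

lemma Legendre_unit:
  assumes "\<not> p dvd a"
  shows "Legendre a p = 1 \<or> Legendre a p = -1"
  using assms unfolding Legendre_def by (auto simp: cong_0_iff)

lemma small_cong_eq: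
  fixes x y p :: int
  assumes "x \<in> {-1,0,1}" "y \<in> {-1,0,1}" "p > 2" "[x = y] (mod p)"
  shows "x = y"
proof -
  have d: "p dvd \<bar>x - y\<bar>" using assms(4) by (simp add: cong_iff_dvd_diff)
  have b: "\<bar>x - y\<bar> \<le> 2" using assms(1,2) by auto
  show ?thesis
  proof (rule ccontr)
    assume "x \<noteq> y"
    then have "\<bar>x - y\<bar> > 0" by simp
    then have "p \<le> \<bar>x - y\<bar>" using d zdvd_imp_le by blast
    then show False using b assms(3) by linarith
  qed
qed

lemma euler_int:
  assumes "prime (q::int)" "q > 2"
  shows "[Legendre a q = a ^ nat ((q - 1) div 2)] (mod q)"
proof -
  have "prime (nat q)" "2 < nat q" using assms by auto
  from euler_criterion[OF this, of a]
  have "[Legendre a (int (nat q)) = a ^ ((nat q - 1) div 2)] (mod int (nat q))" .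
  moreover have "int (nat q) = q" using assms by simp
  moreover have "(nat q - 1) div 2 = nat ((q - 1) div 2)" using assms by (simp add: nat_div_distrib nat_diff_distrib)
  ultimately show ?thesis by simp
qed

lemma Legendre_mult:
  assumes "prime p" "p > 2"
  shows "Legendre (a*b) p = Legendre a p * Legendre b p"
proof -
  have "[Legendre (a*b) p = (a*b) ^ nat ((p - 1) div 2)] (mod p)"
    using euler_int assms by blast
  moreover have "[Legendre a p * Legendre b p = a ^ nat ((p - 1) div 2) * b ^ nat ((p - 1) div 2)] (mod p)"
    using euler_int assms cong_mult by blast
  ultimately have "[Legendre (a*b) p = Legendre a p * Legendre b p] (mod p)"
    by (metis cong_sym cong_trans power_mult_distrib)
  moreover have "Legendre a p * Legendre b p \<in> {-1,0,1}"
    using Legendre_cases[of a p] Legendre_cases[of b p] by auto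
  ultimately show ?thesis using small_cong_eq Legendre_cases assms by blast
qed

definition chi :: "int \<Rightarrow> int" where
  "chi n = (if n mod 4 = 1 then 1 else -1)"

lemma chi_mult:
  assumes "odd m" "odd n"
  shows "chi (m*n) = chi m * chi n"
proof -
  have "m mod 4 = 1 \<or> m mod 4 = 3" using assms(1) by presburger
  moreover have "n mod 4 = 1 \<or> n mod 4 = 3" using assms(2) by presburger
  moreover have "(m*n) mod 4 = ((m mod 4) * (n mod 4)) mod 4" by (simp add: mod_mult_eq)
  ultimately show ?thesis unfolding chi_def by (elim disjE; simp)
qed

lemma Legendre_minus_one:
  assumes "prime p" "p > 2"
  shows "Legendre (-1) p = chi p"
proof -
  have "[Legendre (-1) p = (-1) ^ nat ((p - 1) div 2)] (mod p)"
    using euler_int assms by blast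
  moreover have "(-1::int) ^ nat ((p - 1) div 2) = chi p"
  proof -
    have "odd p" using assms by (simp add: prime_odd_int)
    then have "p mod 4 = 1 \<or> p mod 4 = 3" by presburger
    moreover have "p mod 4 = 1 \<Longrightarrow> even ((p - 1) div 2)" by presburger
    moreover have "p mod 4 = 3 \<Longrightarrow> odd ((p - 1) div 2)" by presburger
    moreover have "(p - 1) div 2 \<ge> 0" using assms by simp
    ultimately show ?thesis unfolding chi_def by (auto simp: even_nat_iff)
  qed
  ultimately show ?thesis using small_cong_eq Legendre_cases assms
    by (metis chi_def insertCI)
qed

lemma int_prime_induct:
  assumes "n > 0" "P 1" "\<And>p m. prime p \<Longrightarrow> m > 0 \<Longrightarrow> P m \<Longrightarrow> P (p*m)"
  shows "P (n::int)"
proof -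
  have "\<forall>n::int. n > 0 \<longrightarrow> nat n = k \<longrightarrow> P n" for k
  proof (induction k rule: less_induct)
    case (less k)
    show ?case
    proof (intro allI impI)
      fix n :: int assume n: "n > 0" "nat n = k"
      show "P n"
      proof (cases "n = 1")
        case True then show ?thesis using assms(2) by simp
      next
        case False
        have nu: "\<not> is_unit n" using False n(1) by (auto simp: zdvd1_eq)
        have nz: "n \<noteq> 0" using n(1) by simp
        obtain p where p: "p dvd n" "prime p" using prime_divisor_exists[OF nz nu] by blast
        define m where "m = n div p"
        have p2: "p \<ge> 2" using p(2) prime_ge_2_int by blast
        have nm: "n = p * m" using p(1) m_def by simp
        have "0 < p * m" using nm n(1) by simp
        then have m0: "m > 0" using p2 by (auto simp: zero_less_mult_iff)
        have "2 * m \<le> p * m" using p2 m0 by (intro mult_right_mono) auto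
        then have "m < n" using nm m0 by linarith
        then have "nat m < k" using n m0 by linarith
        then have "P m" using less.IH m0 by blast
        then show ?thesis using assms(3) p(2) m0 nm by simp
      qed
    qed
  qed
  then show ?thesis using assms(1) by blast
qed

lemma Jacobi_mset: "Jacobi a n = prod_mset (image_mset (Legendre a) (prime_factorization n))"
  unfolding Jacobi_def image_prod_mset_multiplicity
  by (rule prod.cong) (auto simp: count_prime_factorization_prime in_prime_factors_imp_prime)

lemma Jacobi_one_right [simp]: "Jacobi a 1 = 1"
  by (simp add: Jacobi_mset)

lemma Jacobi_prime: "prime p \<Longrightarrow> Jacobi a p = Legendre a p"
  by (simp add: Jacobi_mset prime_factorization_prime)

lemma Jacobi_mult_right:
  "m \<noteq> 0 \<Longrightarrow> n \<noteq> 0 \<Longrightarrow> Jacobi a (m*n) = Jacobi a m * Jacobi a n"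
  by (simp add: Jacobi_mset prime_factorization_mult)

lemma prime_factor_odd_gt2:
  assumes "p \<in> prime_factors (n::int)" "odd n"
  shows "prime p" "p > 2"
proof -
  show "prime p" using assms in_prime_factors_imp_prime by blast
  have "p dvd n" using assms by auto
  then have "odd p" using assms(2) by (metis dvd_trans)
  then show "p > 2" using \<open>prime p\<close> prime_ge_2_int by (metis le_less even_numeral)
qed

lemma Jacobi_mult_left:
  assumes "odd n"
  shows "Jacobi (a*b) n = Jacobi a n * Jacobi b n"
  unfolding Jacobi_def prod.distrib[symmetric] power_mult_distrib[symmetric]
  by (rule prod.cong) (auto simp: Legendre_mult prime_factor_odd_gt2[OF _ assms])

lemma Jacobi_cong:
  assumes "[a = b] (mod n)"
  shows "Jacobi a n = Jacobi b n"
  unfolding Jacobi_def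
proof (rule prod.cong[OF refl])
  fix p assume "p \<in> prime_factors n"
  then have "p dvd n" by (simp add: in_prime_factors_imp_dvd)
  then have "[a = b] (mod p)" using cong_dvd_modulus assms by blast
  then show "Legendre a p ^ multiplicity p n = Legendre b p ^ multiplicity p n"
    by (simp add: Legendre_cong)
qed

lemma Legendre_one: "prime p \<Longrightarrow> Legendre 1 p = 1"
proof -
  assume "prime p"
  then have "\<not> p dvd 1" using not_prime_unit by blast
  then have "\<not> [1 = 0] (mod p)" by (simp add: cong_0_iff)
  moreover have "QuadRes p 1" unfolding QuadRes_def by (metis cong_refl power_one)
  ultimately show ?thesis unfolding Legendre_def by simp
qed

lemma Jacobi_one_left [simp]: "Jacobi 1 n = 1"
  unfolding Jacobi_def by (rule prod.neutral) (auto simp: Legendre_one in_prime_factors_imp_prime)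

lemma Jacobi_sq:
  assumes "coprime a n"
  shows "Jacobi a n ^ 2 = 1"
  unfolding Jacobi_def prod_power_distrib
proof (rule prod.neutral, safe)
  fix p assume p: "p \<in> prime_factors n"
  have "\<not> p dvd a"
  proof
    assume "p dvd a"
    moreover have "p dvd n" using p by auto
    ultimately have "is_unit p" using assms by (meson coprime_common_divisor)
    then show False using p in_prime_factors_imp_prime not_prime_unit by blast
  qed
  then have "Legendre a p ^ 2 = 1" using Legendre_unit by fastforce
  moreover have "(Legendre a p ^ multiplicity p n) ^ 2 = (Legendre a p ^ 2) ^ multiplicity p n"
    by (metis power_mult mult.commute)
  ultimately show "(Legendre a p ^ multiplicity p n) ^ 2 = 1" by simp
qed

lemma Jacobi_minus_one:
  assumes "n > 0" "odd n"
  shows "Jacobi (-1) n = chi n"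
proof -
  have "odd n \<longrightarrow> Jacobi (-1) n = chi n"
  proof (rule int_prime_induct[OF assms(1)])
    show "odd 1 \<longrightarrow> Jacobi (-1) 1 = chi 1" by (simp add: chi_def)
  next
    fix p m :: int assume p: "prime p" "m > 0" and IH: "odd m \<longrightarrow> Jacobi (-1) m = chi m"
    show "odd (p*m) \<longrightarrow> Jacobi (-1) (p*m) = chi (p*m)"
    proof
      assume o: "odd (p*m)"
      then have "odd p" "odd m" by auto
      then have "p > 2" using p prime_ge_2_int by (metis le_less even_numeral)
      have "Jacobi (-1) (p*m) = Jacobi (-1) p * Jacobi (-1) m"
        using p by (intro Jacobi_mult_right) auto
      also have "\<dots> = chi p * chi m"
        using IH \<open>odd m\<close> Jacobi_prime Legendre_minus_one p \<open>p > 2\<close> by simp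
      also have "\<dots> = chi (p*m)" using chi_mult \<open>odd p\<close> \<open>odd m\<close> by simp
      finally show "Jacobi (-1) (p*m) = chi (p*m)" .
    qed
  qed
  then show ?thesis using assms by blast
qed

definition psi :: "int \<Rightarrow> int \<Rightarrow> int" where
  "psi m n = (if chi m = -1 \<and> chi n = -1 then -1 else 1)"

lemma chi_cases: "chi n = 1 \<or> chi n = -1"
  by (simp add: chi_def)

lemma psi_mult_left:
  assumes "odd a" "odd b"
  shows "psi (a*b) c = psi a c * psi b c"
  using chi_mult[OF assms] chi_cases[of a] chi_cases[of b] chi_cases[of c]
  unfolding psi_def by auto

lemma psi_comm: "psi m n = psi n m"
  unfolding psi_def by auto

lemma psi_one [simp]: "psi 1 n = 1"
  unfolding psi_def chi_def by simp

lemma recip_prime: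
  assumes "prime p" "prime q" "p > 2" "q > 2" "p \<noteq> q"
  shows "Legendre p q * Legendre q p = psi p q"
proof -
  have "Legendre p q * Legendre q p = (-1::int) ^ (nat ((p - 1) div 2 * ((q - 1) div 2)))"
    using Quadratic_Reciprocity_int[of p q] assms by simp
  moreover have "odd p" "odd q" using assms by (simp_all add: prime_odd_int)
  moreover have "(p - 1) div 2 \<ge> 0" "(q - 1) div 2 \<ge> 0" using assms by simp_all
  moreover have "(-1::int) ^ (nat ((p - 1) div 2 * ((q - 1) div 2))) =
     (if even ((p - 1) div 2) \<or> even ((q - 1) div 2) then 1 else -1)"
    using calculation(4,5) by (simp add: minus_one_power_iff even_nat_iff)
  moreover have "p mod 4 = 1 \<longleftrightarrow> even ((p - 1) div 2)" using \<open>odd p\<close> by presburger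
  moreover have "q mod 4 = 1 \<longleftrightarrow> even ((q - 1) div 2)" using \<open>odd q\<close> by presburger
  ultimately show ?thesis
    unfolding psi_def chi_def by auto
qed

lemma Jacobi_recip_prime:
  assumes q: "prime q" "q > 2" and m: "m > 0" "odd m" "coprime m q"
  shows "Jacobi m q * Jacobi q m = psi m q"
proof -
  have "odd m \<longrightarrow> coprime m q \<longrightarrow> Jacobi m q * Jacobi q m = psi m q"
  proof (rule int_prime_induct[OF m(1)])
    show "odd 1 \<longrightarrow> coprime 1 q \<longrightarrow> Jacobi 1 q * Jacobi q 1 = psi 1 q" by simp
  next
    fix p m' :: int assume p: "prime p" "m' > 0"
      and IH: "odd m' \<longrightarrow> coprime m' q \<longrightarrow> Jacobi m' q * Jacobi q m' = psi m' q"
    show "odd (p*m') \<longrightarrow> coprime (p*m') q \<longrightarrow> Jacobi (p*m') q * Jacobi q (p*m') = psi (p*m') q"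
    proof (intro impI)
      assume o: "odd (p*m')" and c: "coprime (p*m') q"
      then have "odd p" "odd m'" by auto
      then have p2: "p > 2" using p prime_ge_2_int by (metis le_less even_numeral)
      have cp: "coprime p q" "coprime m' q" using c by auto
      have pq: "p \<noteq> q" using cp(1) p(1) by (metis coprime_self not_prime_unit)
      have oq: "odd q" using q by (simp add: prime_odd_int)
      have "Jacobi (p*m') q * Jacobi q (p*m') = (Jacobi p q * Jacobi m' q) * (Jacobi q p * Jacobi q m')"
        using Jacobi_mult_left[OF oq] Jacobi_mult_right p by auto
      also have "\<dots> = (Legendre p q * Legendre q p) * (Jacobi m' q * Jacobi q m')"
        using Jacobi_prime p q by simp
      also have "\<dots> = psi p q * psi m' q"
        using recip_prime[OF p(1) q(1) p2 q(2) pq] IH \<open>odd m'\<close> cp by simp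
      also have "\<dots> = psi (p*m') q" using psi_mult_left \<open>odd p\<close> \<open>odd m'\<close> by simp
      finally show "Jacobi (p*m') q * Jacobi q (p*m') = psi (p*m') q" .
    qed
  qed
  then show ?thesis using m by blast
qed

lemma Jacobi_recip:
  assumes "m > 0" "odd m" "n > 0" "odd n" "coprime m n"
  shows "Jacobi m n * Jacobi n m = psi m n"
proof -
  have "odd n \<longrightarrow> coprime m n \<longrightarrow> Jacobi m n * Jacobi n m = psi m n"
  proof (rule int_prime_induct[OF assms(3)])
    show "odd 1 \<longrightarrow> coprime m 1 \<longrightarrow> Jacobi m 1 * Jacobi 1 m = psi m 1"
      by (simp add: psi_comm[of m 1])
  next
    fix q n' :: int assume q: "prime q" "n' > 0"
      and IH: "odd n' \<longrightarrow> coprime m n' \<longrightarrow> Jacobi m n' * Jacobi n' m = psi m n'"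
    show "odd (q*n') \<longrightarrow> coprime m (q*n') \<longrightarrow> Jacobi m (q*n') * Jacobi (q*n') m = psi m (q*n')"
    proof (intro impI)
      assume o: "odd (q*n')" and c: "coprime m (q*n')"
      then have "odd q" "odd n'" by auto
      then have q2: "q > 2" using q prime_ge_2_int by (metis le_less even_numeral)
      have cp: "coprime m q" "coprime m n'" using c by auto
      have "Jacobi m (q*n') * Jacobi (q*n') m = (Jacobi m q * Jacobi m n') * (Jacobi q m * Jacobi n' m)"
        using Jacobi_mult_left[OF assms(2)] Jacobi_mult_right q by auto
      also have "\<dots> = (Jacobi m q * Jacobi q m) * (Jacobi m n' * Jacobi n' m)" by simp
      also have "\<dots> = psi m q * psi m n'"
        using Jacobi_recip_prime[OF q(1) q2 assms(1,2) cp(1)] IH \<open>odd n'\<close> cp by simp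
      also have "\<dots> = psi m (q*n')" using psi_mult_left \<open>odd q\<close> \<open>odd n'\<close> psi_comm by metis
      finally show "Jacobi m (q*n') * Jacobi (q*n') m = psi m (q*n')" .
    qed
  qed
  then show ?thesis using assms by blast
qed

lemma Jacobi_swap11:
  assumes "m > 0" "n > 0" "m mod 4 = 1" "n mod 4 = 1" "coprime m n"
  shows "Jacobi m n = Jacobi n m"
proof -
  have om: "odd m" "odd n" using assms(3,4) by presburger+
  have "psi m n = 1" unfolding psi_def chi_def using assms(3) by simp
  then have 1: "Jacobi m n * Jacobi n m = 1" using Jacobi_recip[OF assms(1) om(1) assms(2) om(2) assms(5)] by simp
  have 2: "Jacobi n m ^ 2 = 1" using Jacobi_sq assms(5) by (simp add: coprime_commute)
  have "Jacobi m n = Jacobi m n * Jacobi n m ^ 2" using 2 by simp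
  also have "\<dots> = Jacobi n m" using 1 by (simp add: power2_eq_square algebra_simps)
  finally show ?thesis .
qed

lemma Jacobi_shift:
  assumes "m > 0" "n > 0" "m mod 4 = 0" "n mod 4 = 1" "coprime m n"
  shows "Jacobi m (n + m) = Jacobi m n"
proof -
  define N where "N = n + m"
  have N: "N > 0" "N mod 4 = 1" "odd N" using assms unfolding N_def by presburger+
  have "[m = -1 * n] (mod N)" unfolding N_def by (simp add: cong_iff_dvd_diff add.commute)
  then have "Jacobi m N = Jacobi (-1 * n) N" by (rule Jacobi_cong)
  also have "\<dots> = Jacobi (-1) N * Jacobi n N" using Jacobi_mult_left N(3) by blast
  also have "\<dots> = Jacobi n N" using Jacobi_minus_one N by (simp add: chi_def)
  also have "\<dots> = Jacobi N n"
  proof (rule Jacobi_swap11)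
    have "gcd n N = gcd n m" unfolding N_def by simp
    then show "coprime n N" using assms(5) by (simp add: coprime_iff_gcd_eq_1 gcd.commute)
  qed (use assms N in auto)
  also have "\<dots> = Jacobi m n"
    by (rule Jacobi_cong) (simp add: N_def cong_iff_dvd_diff add.commute)
  finally show ?thesis unfolding N_def .
qed

lemma Jacobi_shift_iter:
  assumes "m > 0" "n > 0" "m mod 4 = 0" "n mod 4 = 1" "coprime m n"
  shows "Jacobi m (n + int c * m) = Jacobi m n"
proof (induction c)
  case 0 then show ?case by simp
next
  case (Suc c)
  have "Jacobi m (n + int (Suc c) * m) = Jacobi m ((n + int c * m) + m)" by (simp add: algebra_simps)
  also have "\<dots> = Jacobi m (n + int c * m)"
  proof (rule Jacobi_shift)
    show "n + int c * m > 0" using assms by (simp add: add_pos_nonneg)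
    show "(n + int c * m) mod 4 = 1" using assms(3,4) by (simp add: mod_add_eq[symmetric] mod_mult_right_eq[symmetric])
    have "gcd m (n + int c * m) = gcd m n" using gcd_add_mult[of m "int c" n] by (simp add: add.commute)
    then show "coprime m (n + int c * m)" using assms(5) by (simp add: coprime_iff_gcd_eq_1)
  qed (use assms in auto)
  finally show ?case using Suc by simp
qed

lemma cf_s0 [simp]: "cf_s a 0 = a 0" and cf_t0 [simp]: "cf_t a 0 = 1"
  and cf_s1 [simp]: "cf_s a (Suc 0) = a 1 * a 0 + 1" and cf_t1 [simp]: "cf_t a (Suc 0) = a 1"
  and cf_sSS: "cf_s a (Suc (Suc k)) = a (Suc (Suc k)) * cf_s a (Suc k) + cf_s a k"
  and cf_tSS: "cf_t a (Suc (Suc k)) = a (Suc (Suc k)) * cf_t a (Suc k) + cf_t a k"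
  by (simp_all add: cf_s_def cf_t_def)

lemma cf_det: "cf_s a (Suc k) * cf_t a k - cf_s a k * cf_t a (Suc k) = (-1) ^ k"
proof (induction k)
  case 0 then show ?case by simp
next
  case (Suc k)
  have "cf_s a (Suc (Suc k)) * cf_t a (Suc k) - cf_s a (Suc k) * cf_t a (Suc (Suc k))
        = - (cf_s a (Suc k) * cf_t a k - cf_s a k * cf_t a (Suc k))"
    by (simp add: cf_sSS cf_tSS algebra_simps)
  then show ?case using Suc by simp
qed

lemma cf_det2: "cf_s a (Suc (Suc k)) * cf_t a k - cf_s a k * cf_t a (Suc (Suc k)) = a (Suc (Suc k)) * (-1) ^ k"
proof -
  have "cf_s a (Suc (Suc k)) * cf_t a k - cf_s a k * cf_t a (Suc (Suc k))
       = a (Suc (Suc k)) * (cf_s a (Suc k) * cf_t a k - cf_s a k * cf_t a (Suc k))"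
    by (simp add: cf_sSS cf_tSS algebra_simps)
  then show ?thesis using cf_det by simp
qed

lemma cf_coprime: "coprime (cf_t a k) (cf_t a (Suc k))"
proof (rule coprimeI)
  fix c assume "c dvd cf_t a k" "c dvd cf_t a (Suc k)"
  then have "c dvd cf_s a (Suc k) * cf_t a k - cf_s a k * cf_t a (Suc k)" by simp
  then have "c dvd (-1) ^ k" using cf_det by metis
  moreover have "is_unit ((-1::int) ^ k)" by simp
  ultimately show "is_unit c" using dvd_unit_imp_unit by blast
qed

context
  fixes a :: "nat \<Rightarrow> int"
  assumes apos: "\<And>i. i \<ge> 1 \<Longrightarrow> a i \<ge> 1"
begin

lemma ge_mult: "(x::int) \<ge> 1 \<Longrightarrow> y \<ge> 0 \<Longrightarrow> x * y \<ge> y"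
  using mult_right_mono[of 1 x y] by simp

lemma cf_t_mono: "cf_t a k \<ge> 1 \<and> cf_t a k \<le> cf_t a (Suc k)"
proof (induction k)
  case 0 then show ?case using apos[of 1] by simp
next
  case (Suc k)
  have "cf_t a (Suc (Suc k)) = a (Suc (Suc k)) * cf_t a (Suc k) + cf_t a k" by (rule cf_tSS)
  moreover have "a (Suc (Suc k)) * cf_t a (Suc k) \<ge> cf_t a (Suc k)"
    using apos[of "Suc (Suc k)"] Suc by (intro ge_mult) auto
  ultimately show ?case using Suc by (intro conjI; linarith)
qed

lemma cf_t_pos: "cf_t a k \<ge> 1" using cf_t_mono by blast

lemma cf_t_ge: "cf_t a k \<ge> int k"
proof (induction k rule: nat_less_induct)
  case (1 n)
  show ?case
  proof (cases n)
    case 0 then show ?thesis by simp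
  next
    case (Suc m)
    show ?thesis
    proof (cases m)
      case 0 then show ?thesis using Suc apos[of 1] by simp
    next
      case (Suc j)
      have e: "cf_t a n = a n * cf_t a (Suc j) + cf_t a j" using cf_tSS \<open>n = Suc m\<close> Suc by simp
      have h: "a n * cf_t a (Suc j) \<ge> cf_t a (Suc j)"
        using apos[of n] cf_t_pos[of "Suc j"] \<open>n = Suc m\<close> by (intro ge_mult) auto
      have i: "cf_t a (Suc j) \<ge> int (Suc j)" using 1[rule_format, of "Suc j"] \<open>n = Suc m\<close> Suc by simp
      have "cf_t a j \<ge> 1" using cf_t_pos by blast
      then have "cf_t a n \<ge> int (Suc j) + 1" using e h i by linarith
      then show ?thesis using \<open>n = Suc m\<close> Suc by simp
    qed
  qed
qed

lemma cf_tt_ge: "cf_t a k * cf_t a (Suc k) \<ge> 2 ^ k"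
proof (induction k)
  case 0 then show ?case using cf_t_pos[of 1] by simp
next
  case (Suc k)
  have "cf_t a (Suc (Suc k)) \<ge> 2 * cf_t a k"
  proof -
    have "cf_t a (Suc (Suc k)) = a (Suc (Suc k)) * cf_t a (Suc k) + cf_t a k" by (rule cf_tSS)
    moreover have "a (Suc (Suc k)) * cf_t a (Suc k) \<ge> cf_t a (Suc k)"
      using apos[of "Suc (Suc k)"] cf_t_pos[of "Suc k"] by (intro ge_mult) auto
    moreover have "cf_t a (Suc k) \<ge> cf_t a k" using cf_t_mono by blast
    ultimately show ?thesis by simp
  qed
  then have "cf_t a (Suc k) * cf_t a (Suc (Suc k)) \<ge> cf_t a (Suc k) * (2 * cf_t a k)"
    using cf_t_pos[of "Suc k"] by (simp add: mult_left_mono)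
  then show ?case using Suc by (simp add: algebra_simps)
qed

end


definition cfe :: "(nat \<Rightarrow> int) \<Rightarrow> nat \<Rightarrow> real" where
  "cfe a k = real_of_int (cf_s a k) / real_of_int (cf_t a k)"

context
  fixes a :: "nat \<Rightarrow> int"
  assumes apos: "\<And>i. i \<ge> 1 \<Longrightarrow> a i \<ge> 1"
begin

lemma tpos_r: "real_of_int (cf_t a k) > 0"
  using cf_t_pos[where a=a, OF apos, of k] by simp

lemma cfe_diff: "cfe a (Suc k) - cfe a k = (-1) ^ k / (real_of_int (cf_t a k) * real_of_int (cf_t a (Suc k)))"
proof -
  have d: "real_of_int (cf_s a (Suc k)) * real_of_int (cf_t a k) - real_of_int (cf_s a k) * real_of_int (cf_t a (Suc k)) = (-1) ^ k"
    using arg_cong[OF cf_det[of a k], of real_of_int] by simp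
  show ?thesis unfolding cfe_def using tpos_r[of k] tpos_r[of "Suc k"] d
    by (simp add: field_simps)
qed

lemma cfe_diff2: "cfe a (Suc (Suc k)) - cfe a k = real_of_int (a (Suc (Suc k))) * (-1) ^ k / (real_of_int (cf_t a k) * real_of_int (cf_t a (Suc (Suc k))))"
proof -
  have d: "real_of_int (cf_s a (Suc (Suc k))) * real_of_int (cf_t a k) - real_of_int (cf_s a k) * real_of_int (cf_t a (Suc (Suc k))) = real_of_int (a (Suc (Suc k))) * (-1) ^ k"
    using arg_cong[OF cf_det2[of a k], of real_of_int] by simp
  show ?thesis unfolding cfe_def using tpos_r[of k] tpos_r[of "Suc (Suc k)"] d
    by (simp add: field_simps)
qed

lemma cfe_diff_abs: "\<bar>cfe a (Suc k) - cfe a k\<bar> = 1 / (real_of_int (cf_t a k) * real_of_int (cf_t a (Suc k)))"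
  using cfe_diff[of k] tpos_r[of k] tpos_r[of "Suc k"] by (simp add: abs_mult)

lemma cfe_diff_bound: "norm (cfe a (Suc k) - cfe a k) \<le> (1/2) ^ k"
proof -
  have "real_of_int (cf_t a k * cf_t a (Suc k)) \<ge> 2 ^ k"
    using cf_tt_ge[where a=a, OF apos, of k] by (metis of_int_le_iff of_int_numeral of_int_power)
  then have "(2::real) ^ k \<le> real_of_int (cf_t a k) * real_of_int (cf_t a (Suc k))" by simp
  then have "1 / (real_of_int (cf_t a k) * real_of_int (cf_t a (Suc k))) \<le> 1 / 2 ^ k"
    by (intro divide_left_mono) (use tpos_r[of k] tpos_r[of "Suc k"] in auto)
  then show ?thesis using cfe_diff_abs[of k] by (simp add: power_one_over)
qed

lemma cfe_conv: "cfe a \<longlonglongrightarrow> cfe a 0 + (\<Sum>j. cfe a (Suc j) - cfe a j)"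
proof -
  have sm: "summable (\<lambda>j. cfe a (Suc j) - cfe a j)"
  proof (rule summable_comparison_test[where g = "\<lambda>j. (1/2::real) ^ j"])
    show "\<exists>N. \<forall>n\<ge>N. norm (cfe a (Suc n) - cfe a n) \<le> (1/2) ^ n"
      using cfe_diff_bound by blast
    show "summable (\<lambda>j. (1/2::real) ^ j)" by (simp add: summable_geometric)
  qed
  have "(\<lambda>n. cfe a 0 + (\<Sum>j<n. cfe a (Suc j) - cfe a j)) \<longlonglongrightarrow> cfe a 0 + (\<Sum>j. cfe a (Suc j) - cfe a j)"
    by (intro tendsto_add tendsto_const summable_LIMSEQ sm)
  moreover have "(\<lambda>n. cfe a 0 + (\<Sum>j<n. cfe a (Suc j) - cfe a j)) = cfe a"
    by (rule ext) (simp add: sum_lessThan_telescope)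
  ultimately show ?thesis by simp
qed

lemma cfe_between:
  assumes lim: "cfe a \<longlonglongrightarrow> x"
  shows "0 < \<bar>x - cfe a k\<bar> \<and> \<bar>x - cfe a k\<bar> < \<bar>cfe a (Suc k) - cfe a k\<bar>"
proof -
  have inc: "cfe a (2*j) < cfe a (2*Suc j)" for j
  proof -
    have "cfe a (Suc (Suc (2*j))) - cfe a (2*j) > 0"
      unfolding cfe_diff2 using apos[of "Suc (Suc (2*j))"] tpos_r[of "2*j"] tpos_r[of "Suc (Suc (2*j))"]
      by (simp add: divide_pos_pos)
    then show ?thesis by simp
  qed
  have dec: "cfe a (Suc (2*Suc j)) < cfe a (Suc (2*j))" for j
  proof -
    have "cfe a (Suc (Suc (Suc (2*j)))) - cfe a (Suc (2*j)) < 0"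
      unfolding cfe_diff2 using apos[of "Suc (Suc (Suc (2*j)))"] tpos_r[of "Suc (2*j)"] tpos_r[of "Suc (Suc (Suc (2*j)))"]
      by (simp add: divide_neg_pos)
    then show ?thesis by simp
  qed
  have sm1: "strict_mono (\<lambda>j::nat. 2*j)" by (rule strict_monoI) simp
  have sm2: "strict_mono (\<lambda>j::nat. Suc (2*j))" by (rule strict_monoI) simp
  have l1: "(\<lambda>j. cfe a (2*j)) \<longlonglongrightarrow> x" using LIMSEQ_subseq_LIMSEQ[OF lim sm1] by (simp add: o_def)
  have l2: "(\<lambda>j. cfe a (Suc (2*j))) \<longlonglongrightarrow> x" using LIMSEQ_subseq_LIMSEQ[OF lim sm2] by (simp add: o_def)
  have i1: "incseq (\<lambda>j. cfe a (2*j))" by (rule incseq_SucI) (use inc in \<open>simp add: less_imp_le\<close>)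
  have i2: "decseq (\<lambda>j. cfe a (Suc (2*j)))" by (rule decseq_SucI) (use dec in \<open>simp add: less_imp_le\<close>)
  have ev: "cfe a (2*j) < x" for j using inc[of j] incseq_le[OF i1 l1, of "Suc j"] by simp
  have od: "x < cfe a (Suc (2*j))" for j using dec[of j] decseq_ge[OF i2 l2, of "Suc j"] by simp
  show ?thesis
  proof (cases "even k")
    case True
    then obtain j where k: "k = 2*j" by blast
    show ?thesis using ev[of j] od[of j] k by auto
  next
    case False
    then obtain j where k: "k = Suc (2*j)" by (metis oddE Suc_eq_plus1)
    show ?thesis using ev[of "Suc j"] od[of j] k by auto
  qed
qed

lemma cfe_irrational:
  assumes lim: "cfe a \<longlonglongrightarrow> x"
  shows "x \<notin> \<rat>"
proof
  assume "x \<in> \<rat>"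
  then obtain p q where q: "q > 0" and x: "x = of_int p / of_int q" by (elim Rats_cases')
  define k where "k = nat q"
  have tk: "real_of_int (cf_t a k) > 0" "real_of_int (cf_t a (Suc k)) > 0" using tpos_r by auto
  have "cf_t a (Suc k) \<ge> int (Suc k)" using cf_t_ge[where a=a, OF apos] by blast
  then have t1q: "real_of_int (cf_t a (Suc k)) > real_of_int q" using q unfolding k_def by simp
  define D where "D = p * cf_t a k - q * cf_s a k"
  have eq: "x - cfe a k = real_of_int D / (real_of_int q * real_of_int (cf_t a k))"
    unfolding x cfe_def D_def using q tk by (simp add: field_simps)
  have b: "0 < \<bar>x - cfe a k\<bar>" "\<bar>x - cfe a k\<bar> < 1 / (real_of_int (cf_t a k) * real_of_int (cf_t a (Suc k)))"
    using cfe_between[OF lim, of k] cfe_diff_abs[of k] by auto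
  have "D \<noteq> 0" using b(1) eq by auto
  have "\<bar>real_of_int D\<bar> / (real_of_int q * real_of_int (cf_t a k)) < 1 / (real_of_int (cf_t a k) * real_of_int (cf_t a (Suc k)))"
    using b(2) eq q tk by (simp add: abs_divide abs_mult)
  then have "\<bar>real_of_int D\<bar> < real_of_int q / real_of_int (cf_t a (Suc k))"
    using q tk by (simp add: field_simps)
  also have "\<dots> < 1" using t1q q tk by (simp add: field_simps)
  finally have "\<bar>D\<bar> < 1" by linarith
  then show False using \<open>D \<noteq> 0\<close> by linarith
qed

end


definition aL :: "nat \<Rightarrow> nat \<Rightarrow> int" where
  "aL L i = (if i mod L = L - 1 then (if L = 2 then 4 else 3) else if i mod L = 1 then 1 else 4)"

lemma mod4_lin: "((c::int) * x + y) mod 4 = (c * (x mod 4) + y mod 4) mod 4"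
proof -
  have "(c * x + y) mod 4 = (c * x mod 4 + y mod 4) mod 4" by (rule mod_add_eq[symmetric])
  also have "c * x mod 4 = c * (x mod 4) mod 4" by (rule mod_mult_right_eq[symmetric])
  also have "(c * (x mod 4) mod 4 + y mod 4) mod 4 = (c * (x mod 4) + y mod 4) mod 4" by (rule mod_add_left_eq)
  finally show ?thesis .
qed

context
  fixes L :: nat
  assumes L2: "L \<ge> 2"
begin

lemma aL_pos: "aL L i \<ge> 1" unfolding aL_def by auto

lemma aL_range: "aL L i \<in> {1,2,3,4}" unfolding aL_def by auto

lemma aL_per: "aL L (i + L) = aL L i" unfolding aL_def by simp

lemma modSuc: "Suc k mod L = (if k mod L = L - 1 then 0 else Suc (k mod L))"
proof -
  have "Suc (k mod L) = L \<longleftrightarrow> k mod L = L - 1" using L2 by auto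
  then show ?thesis by (simp add: mod_Suc)
qed

abbreviation "tt k \<equiv> cf_t (aL L) k"

lemma t_mod4: "tt k mod 4 = (if k mod L = L - 1 then 0 else 1)"
proof -
  have "tt k mod 4 = (if k mod L = L - 1 then 0 else 1) \<and>
        tt (Suc k) mod 4 = (if Suc k mod L = L - 1 then 0 else 1)"
  proof (induction k)
    case 0
    have "0 mod L \<noteq> L - 1" using L2 by simp
    moreover have "tt (Suc 0) mod 4 = (if Suc 0 mod L = L - 1 then 0 else 1)"
    proof (cases "L = 2")
      case True then show ?thesis by (simp add: aL_def)
    next
      case False
      then have "Suc 0 mod L = 1" "1 \<noteq> L - 1" using L2 by auto
      then show ?thesis by (simp add: aL_def)
    qed
    ultimately show ?case by simp
  next
    case (Suc k)
    define r where "r = k mod L"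
    have rL: "r < L" unfolding r_def using L2 by simp
    have e: "tt (Suc (Suc k)) mod 4 = (aL L (Suc (Suc k)) * (tt (Suc k) mod 4) + tt k mod 4) mod 4"
      unfolding cf_tSS by (rule mod4_lin)
    have r1: "Suc k mod L = (if r = L - 1 then 0 else Suc r)" unfolding r_def by (rule modSuc)
    have r2: "Suc (Suc k) mod L = (if Suc k mod L = L - 1 then 0 else Suc (Suc k mod L))" by (rule modSuc)
    have IH1: "tt k mod 4 = (if r = L - 1 then 0 else 1)" using Suc r_def by simp
    have IH2: "tt (Suc k) mod 4 = (if Suc k mod L = L - 1 then 0 else 1)" using Suc by simp
    consider "r = L - 1" | "r = L - 2" | "r < L - 2" using rL by linarith
    then have "tt (Suc (Suc k)) mod 4 = (if Suc (Suc k) mod L = L - 1 then 0 else 1)"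
    proof cases
      case 1
      then have a: "Suc k mod L = 0" "Suc (Suc k) mod L = 1" using r1 r2 L2 by auto
      show ?thesis
      proof (cases "L = 2")
        case True then show ?thesis using e a IH1 IH2 1 by (simp add: aL_def)
      next
        case False
        then have "1 \<noteq> L - 1" using L2 by auto
        then show ?thesis using e a IH1 IH2 1 L2 by (simp add: aL_def)
      qed
    next
      case 2
      then have a: "Suc k mod L = L - 1" "Suc (Suc k) mod L = 0" "r \<noteq> L - 1" using r1 r2 L2 by auto
      then show ?thesis using e IH1 IH2 L2 by (simp add: aL_def)
    next
      case 3
      then have a: "Suc k mod L = Suc r" "Suc r \<noteq> L - 1" "Suc (Suc k) mod L = Suc (Suc r)" "r \<noteq> L - 1"
        using r1 r2 L2 by auto
      show ?thesis
      proof (cases "Suc (Suc r) = L - 1")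
        case True
        then have "L \<noteq> 2" by simp
        then show ?thesis using e IH1 IH2 a True by (simp add: aL_def)
      next
        case False
        then show ?thesis using e IH1 IH2 a by (simp add: aL_def)
      qed
    qed
    then show ?case using Suc by simp
  qed
  then show ?thesis by blast
qed

lemma ap: "\<And>i. i \<ge> 1 \<Longrightarrow> aL L i \<ge> 1" using aL_pos by blast

lemma tt_pos: "tt k > 0" using cf_t_pos[where a="aL L", OF ap, of k] by simp

lemma t_jac: "Suc k mod L \<noteq> L - 1 \<Longrightarrow> Jacobi (tt k) (tt (Suc k)) = 1"
proof (induction k rule: less_induct)
  case (less k)
  show ?case
  proof (cases "k mod L = L - 1")
    case False
    have m: "tt k mod 4 = 1" "tt (Suc k) mod 4 = 1" using t_mod4[of k] t_mod4[of "Suc k"] False less.prems by auto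
    have "Jacobi (tt k) (tt (Suc k)) = Jacobi (tt (Suc k)) (tt k)"
      using Jacobi_swap11[OF tt_pos tt_pos m cf_coprime] .
    also have "\<dots> = 1"
    proof (cases k)
      case 0 then show ?thesis by simp
    next
      case (Suc j)
      have "[tt (Suc k) = tt j] (mod tt k)" unfolding Suc cf_tSS
        by (simp add: cong_iff_dvd_diff)
      then have "Jacobi (tt (Suc k)) (tt k) = Jacobi (tt j) (tt (Suc j))"
        using Jacobi_cong Suc by simp
      also have "\<dots> = 1" using less.IH[of j] Suc False by simp
      finally show ?thesis .
    qed
    finally show ?thesis .
  next
    case True
    have "k \<noteq> 0" using True L2 by (cases k) auto
    then obtain j where kj: "k = Suc j" by (cases k) auto
    have jL: "j mod L \<noteq> L - 1" using True modSuc[of j] L2 kj by (auto split: if_splits)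
    have s0: "Suc k mod L = 0" using modSuc[of k] True by simp
    have a4: "aL L (Suc k) = 4" using s0 L2 unfolding aL_def by simp
    have "tt (Suc k) = tt j + int 4 * tt k" unfolding kj cf_tSS using a4 kj by simp
    then have "Jacobi (tt k) (tt (Suc k)) = Jacobi (tt k) (tt j)"
      using Jacobi_shift_iter[OF tt_pos tt_pos, of k j 4] t_mod4[of k] t_mod4[of j] True jL
        cf_coprime[of "aL L" j] kj by (simp add: coprime_commute)
    also have "\<dots> = 1"
    proof (cases j)
      case 0 then show ?thesis by simp
    next
      case (Suc i)
      have "[tt k = tt i] (mod tt j)" unfolding kj Suc cf_tSS
        by (simp add: cong_iff_dvd_diff)
      then have "Jacobi (tt k) (tt j) = Jacobi (tt i) (tt (Suc i))"
        using Jacobi_cong Suc by simp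
      also have "\<dots> = 1" using less.IH[of i] Suc kj jL by simp
      finally show ?thesis .
    qed
    finally show ?thesis .
  qed
qed

lemma s_jac: "k mod L \<noteq> L - 1 \<Longrightarrow> Jacobi (cf_s (aL L) k) (tt k) = 1"
proof (cases k)
  case 0 then show ?thesis by simp
next
  case (Suc j)
  assume h: "k mod L \<noteq> L - 1"
  have m: "tt k mod 4 = 1" using t_mod4[of k] h by simp
  then have o: "odd (tt k)" by presburger
  have "[cf_s (aL L) k * tt j = (-1) ^ j] (mod tt k)"
  proof -
    have d: "cf_s (aL L) (Suc j) * tt j - cf_s (aL L) j * tt (Suc j) = (-1) ^ j" by (rule cf_det)
    have "cf_s (aL L) (Suc j) * tt j - (-1) ^ j = cf_s (aL L) j * tt (Suc j)" using d by linarith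
    then show ?thesis unfolding Suc cong_iff_dvd_diff by simp
  qed
  then have "Jacobi (cf_s (aL L) k * tt j) (tt k) = Jacobi ((-1) ^ j) (tt k)" by (rule Jacobi_cong)
  moreover have "Jacobi (cf_s (aL L) k * tt j) (tt k) = Jacobi (cf_s (aL L) k) (tt k)"
    using Jacobi_mult_left[OF o] t_jac[of j] h Suc by simp
  moreover have "Jacobi ((-1) ^ j) (tt k) = 1"
  proof (cases "even j")
    case True then show ?thesis by simp
  next
    case False
    then have "Jacobi ((-1) ^ j) (tt k) = Jacobi (-1) (tt k)" by simp
    also have "\<dots> = 1" using Jacobi_minus_one[OF tt_pos o] m by (simp add: chi_def)
    finally show ?thesis .
  qed
  ultimately show ?thesis by simp
qed

end


lemma m4e: "(n::int) mod 4 = 0 \<Longrightarrow> even n" by presburger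
lemma m4o: "(n::int) mod 4 = 1 \<Longrightarrow> odd n" by presburger

theorem theorem8:
  fixes L :: nat
  assumes "L \<ge> 2"
  shows "\<exists>(x::real) (a::nat \<Rightarrow> int).
           x \<notin> \<rat> \<and> is_cf_expansion x a \<and>
           (\<forall>i. a i \<in> {1, 2, 3, 4}) \<and>
           (\<exists>p>0. \<forall>i. a (i + p) = a i) \<and>
           (\<forall>k. jacobi_seq a k = (if k mod L = L - 1 then JStar else JVal 1))"
proof -
  define a where "a = aL L"
  define x where "x = cfe a 0 + (\<Sum>j. cfe a (Suc j) - cfe a j)"
  have ap: "\<And>i. i \<ge> 1 \<Longrightarrow> a i \<ge> 1" unfolding a_def using aL_pos[OF assms] by blast
  have lim: "cfe a \<longlonglongrightarrow> x" unfolding x_def by (rule cfe_conv[OF ap])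
  have "x \<notin> \<rat>" by (rule cfe_irrational[OF ap lim])
  moreover have "is_cf_expansion x a"
    unfolding is_cf_expansion_def using ap lim by (simp add: cfe_def[abs_def])
  moreover have "\<forall>i. a i \<in> {1, 2, 3, 4}" unfolding a_def using aL_range[OF assms] by blast
  moreover have "\<exists>p>0. \<forall>i. a (i + p) = a i"
    using assms aL_per[OF assms] unfolding a_def by (intro exI[of _ L]) auto
  moreover have "\<forall>k. jacobi_seq a k = (if k mod L = L - 1 then JStar else JVal 1)"
  proof
    fix k
    show "jacobi_seq a k = (if k mod L = L - 1 then JStar else JVal 1)"
    proof (cases "k mod L = L - 1")
      case True
      then have "cf_t a k mod 4 = 0" using t_mod4[OF assms, of k] unfolding a_def by simp
      then have "even (cf_t a k)" by (rule m4e)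
      then show ?thesis using True unfolding jacobi_seq_def jacobi_symb_def by simp
    next
      case False
      then have "cf_t a k mod 4 = 1" using t_mod4[OF assms, of k] unfolding a_def by simp
      then have "odd (cf_t a k)" by (rule m4o)
      then show ?thesis using False s_jac[OF assms False] unfolding jacobi_seq_def jacobi_symb_def a_def
        by simp
    qed
  qed
  ultimately show ?thesis by blast
qed

end
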